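(* Let $m\ge 2$ be an integer and let $T^{(1)}\neq T^{(2)}$ be two fixed binary strings of length $m$, each satisfying the non-self-overlap condition $T^{(s)}_{[1+k,m]}\neq T^{(s)}_{[1,m-k]}$ for all $k=1,\dots,m-1$. For an integer $M\ge m$, let $B$ be a random string uniformly distributed on $\{0,1\}^M$, and for $s=1,2$ let $$c^{(s)}=\#\left\{k\in\{1,\dots,M-m+1\}\ :\ B_{[k,k+m-1]}=T^{(s)}\right\}.$$ Put $\mu=\frac{M-m+1}{2^m}$ and $\sigma^2=M\left(\frac{1}{2^m}-\frac{2m-1}{2^{2m}}\right)$. For $k\in\{-(m-1),\dots,-1\}\cup\{1,\dots,m-1\}$ define $e_k=1$ if either $1\le k\le m-1$ and $T^{(1)}_{[1,m-k]}=T^{(2)}_{[1+k,m]}$, or $-m+1\le k\le -1$ and $T^{(1)}_{[1-k,m]}=T^{(2)}_{[1,m+k]}$; and $e_k=0$ otherwise. Then, with $m$, $T^{(1)}$, $T^{(2)}$ fixed, as $M\to\infty$, $$\mathbb{E}\left[\frac{c^{(1)}-\mu}{\sigma}\cdot\frac{c^{(2)}-\mu}{\sigma}\right]=\frac{-2m+1+\sum_{k=1}^{m-1}2^{m-k}\,(e_k+e_{-k})}{2^m-2m+1}+O\!\left(\frac{1}{M}\right).$$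
   Context: For a binary string $X$, $X_{[s,t]}$ denotes the substring of length $t-s+1$ consisting of the $s$-th through $t$-th bits of $X$. The quantity $c^{(s)}$ is the count of occurrences of the template $T^{(s)}$ in one block used in the NIST Non-overlapping Template Matching Test. *)

theory Defs
  imports "HOL-Probability.Probability" "HOL-Library.Landau_Symbols"
begin

text \<open>Substring X_[s,t] with 1-based indexing: the bits s through t (length t - s + 1).\<close>
definition substr :: "bool list \<Rightarrow> nat \<Rightarrow> nat \<Rightarrow> bool list" where
  "substr X s t = take (t + 1 - s) (drop (s - 1) X)"

definition non_overlapping :: "nat \<Rightarrow> bool list \<Rightarrow> bool" where
  "non_overlapping m T \<longleftrightarrow> (\<forall>k\<in>{1..m-1}. substr T (1+k) m \<noteq> substr T 1 (m-k))"

definition occ_count :: "nat \<Rightarrow> nat \<Rightarrow> bool list \<Rightarrow> bool list \<Rightarrow> nat" where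
  "occ_count M m T B = card {k \<in> {1..M-m+1}. substr B k (k+m-1) = T}"

definition cross_e :: "nat \<Rightarrow> bool list \<Rightarrow> bool list \<Rightarrow> int \<Rightarrow> real" where
  "cross_e m T1 T2 k =
     (if (1 \<le> k \<and> k \<le> int m - 1 \<and> substr T1 1 (m - nat k) = substr T2 (1 + nat k) m)
       \<or> (- int m + 1 \<le> k \<and> k \<le> -1 \<and> substr T1 (1 + nat (-k)) m = substr T2 1 (m - nat (-k)))
      then 1 else 0)"

end

theory Submission
  imports Defs
begin


lemma card_bool_lists: "card {B::bool list. length B = M} = 2 ^ M"
  using card_lists_length_eq[of "UNIV::bool set" M] by simp

lemma finite_bool_lists: "finite {B::bool list. length B = M}"
  using finite_lists_length_eq[of "UNIV::bool set" M] by simp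

lemma count_constr:
  fixes f :: "nat \<Rightarrow> bool"
  assumes "S \<subseteq> {..<M}"
  shows "card {B::bool list. length B = M \<and> (\<forall>i\<in>S. B!i = f i)} = 2 ^ (M - card S)"
proof -
  let ?A = "{B::bool list. length B = M \<and> (\<forall>i\<in>S. B!i = f i)}"
  let ?P = "PiE {..<M} (\<lambda>i. if i \<in> S then {f i} else (UNIV::bool set))"
  have bij: "bij_betw (\<lambda>B. restrict (\<lambda>i. B!i) {..<M}) ?A ?P"
  proof (rule bij_betwI[where g="\<lambda>g. map g [0..<M]"])
    show "(\<lambda>B. restrict (\<lambda>i. B!i) {..<M}) \<in> ?A \<rightarrow> ?P" using assms by auto
    show "(\<lambda>g. map g [0..<M]) \<in> ?P \<rightarrow> ?A" using assms by (auto simp: PiE_def Pi_def split: if_splits)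
    show "map (restrict (\<lambda>i. B!i) {..<M}) [0..<M] = B" if "B \<in> ?A" for B
      using that by (auto intro!: nth_equalityI)
    show "restrict (\<lambda>i. map g [0..<M] ! i) {..<M} = g" if "g \<in> ?P" for g
      using that by (auto simp: PiE_def extensional_def fun_eq_iff)
  qed
  have "card ?A = card ?P" using bij_betw_same_card[OF bij] .
  also have "\<dots> = (\<Prod>i\<in>{..<M}. card (if i \<in> S then {f i} else (UNIV::bool set)))"
    by (rule card_PiE) simp
  also have "\<dots> = (\<Prod>i\<in>{..<M}. if i \<in> S then 1 else 2)"
    by (rule prod.cong) auto
  also have "\<dots> = 2 ^ card ({..<M} - S)"
    by (simp add: prod.If_cases Int_absorb1[OF assms] Diff_eq[symmetric])
  also have "card ({..<M} - S) = M - card S"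
    using assms by (simp add: card_Diff_subset finite_subset)
  finally show ?thesis .
qed



lemma joint:
  assumes "a + d + m \<le> M"
  shows "card {B::bool list. length B = M \<and> (\<forall>t<m. B!(a+t) = U!t) \<and> (\<forall>t<m. B!(a+d+t) = V!t)}
    = (if m \<le> d then 2^(M - 2*m) else if (\<forall>t<m-d. U!(d+t) = V!t) then 2^(M - (m+d)) else 0)"
proof (cases "m \<le> d")
  case True
  let ?S = "{a..<a+m} \<union> {a+d..<a+d+m}"
  let ?f = "\<lambda>i. if i < a+m then U!(i-a) else V!(i-(a+d))"
  have "{B::bool list. length B = M \<and> (\<forall>t<m. B!(a+t) = U!t) \<and> (\<forall>t<m. B!(a+d+t) = V!t)}
     = {B::bool list. length B = M \<and> (\<forall>i\<in>?S. B!i = ?f i)}"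
  proof (intro Collect_cong iffI conjI)
    fix B :: "bool list"
    assume h: "length B = M \<and> (\<forall>t<m. B!(a+t) = U!t) \<and> (\<forall>t<m. B!(a+d+t) = V!t)"
    show "length B = M" using h by simp
    show "\<forall>i\<in>?S. B!i = ?f i"
    proof
      fix i assume "i \<in> ?S"
      then consider "a \<le> i" "i < a+m" | "a+d \<le> i" "i < a+d+m" by auto
      then show "B!i = ?f i"
      proof cases
        case 1 then show ?thesis using h[THEN conjunct2, THEN conjunct1, rule_format, of "i-a"] by auto
      next
        case 2 then show ?thesis using True h[THEN conjunct2, THEN conjunct2, rule_format, of "i-(a+d)"] by auto
      qed
    qed
  next
    fix B :: "bool list"
    assume h: "length B = M \<and> (\<forall>i\<in>?S. B!i = ?f i)"
    show "length B = M" using h by simp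
    show "\<forall>t<m. B!(a+t) = U!t"
    proof (intro allI impI)
      fix t assume "t < m" then show "B!(a+t) = U!t" using h[THEN conjunct2, rule_format, of "a+t"] by auto
    qed
    show "\<forall>t<m. B!(a+d+t) = V!t"
    proof (intro allI impI)
      fix t assume "t < m" then show "B!(a+d+t) = V!t" using True h[THEN conjunct2, rule_format, of "a+d+t"] by auto
    qed
  qed
  also have "card \<dots> = 2 ^ (M - card ?S)"
    by (rule count_constr) (use assms in auto)
  also have "card ?S = 2*m"
    using True by (subst card_Un_disjoint) auto
  finally show ?thesis using True by simp
next
  case False
  show ?thesis
  proof (cases "\<forall>t<m-d. U!(d+t) = V!t")
    case cons: True
    let ?S = "{a..<a+d+m}"
    let ?f = "\<lambda>i. if i < a+d then U!(i-a) else V!(i-(a+d))"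
    have "{B::bool list. length B = M \<and> (\<forall>t<m. B!(a+t) = U!t) \<and> (\<forall>t<m. B!(a+d+t) = V!t)}
       = {B::bool list. length B = M \<and> (\<forall>i\<in>?S. B!i = ?f i)}"
    proof (intro Collect_cong iffI conjI)
      fix B :: "bool list"
      assume h: "length B = M \<and> (\<forall>t<m. B!(a+t) = U!t) \<and> (\<forall>t<m. B!(a+d+t) = V!t)"
      show "length B = M" using h by simp
      show "\<forall>i\<in>?S. B!i = ?f i"
      proof
        fix i assume "i \<in> ?S"
        then consider "a \<le> i" "i < a+d" | "a+d \<le> i" "i < a+d+m" by fastforce
        then show "B!i = ?f i"
        proof cases
          case 1 then show ?thesis using False h[THEN conjunct2, THEN conjunct1, rule_format, of "i-a"] by auto
        next
          case 2 then show ?thesis using h[THEN conjunct2, THEN conjunct2, rule_format, of "i-(a+d)"] by auto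
        qed
      qed
    next
      fix B :: "bool list"
      assume h: "length B = M \<and> (\<forall>i\<in>?S. B!i = ?f i)"
      show "length B = M" using h by simp
      show "\<forall>t<m. B!(a+t) = U!t"
      proof (intro allI impI)
        fix t assume t: "t < m"
        show "B!(a+t) = U!t"
        proof (cases "t < d")
          case True then show ?thesis using h[THEN conjunct2, rule_format, of "a+t"] by auto
        next
          case f2: False
          have "B!(a+t) = V!(t-d)" using h[THEN conjunct2, rule_format, of "a+t"] t f2 by auto
          also have "\<dots> = U!(d+(t-d))" using cons[rule_format, of "t-d"] t f2 by auto
          finally show ?thesis using f2 by simp
        qed
      qed
      show "\<forall>t<m. B!(a+d+t) = V!t"
      proof (intro allI impI)
        fix t assume "t < m" then show "B!(a+d+t) = V!t" using h[THEN conjunct2, rule_format, of "a+d+t"] by auto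
      qed
    qed
    also have "card \<dots> = 2 ^ (M - card ?S)"
      by (rule count_constr) (use assms in auto)
    finally show ?thesis using False cons by (simp add: add.commute)
  next
    case ncons: False
    then obtain t where t: "t < m - d" "U!(d+t) \<noteq> V!t" by auto
    have e: "{B::bool list. length B = M \<and> (\<forall>t<m. B!(a+t) = U!t) \<and> (\<forall>t<m. B!(a+d+t) = V!t)} = {}"
    proof (rule ccontr)
      assume "\<not> ?thesis"
      then obtain B where h: "(\<forall>t<m. B!(a+t) = U!t)" "(\<forall>t<m. B!(a+d+t) = V!t)" by auto
      have "B!(a+(d+t)) = U!(d+t)" using h(1) t by auto
      moreover have "B!(a+d+t) = V!t" using h(2) t by auto
      ultimately show False using t by (simp add: add.assoc)
    qed
    have r: "(if m \<le> d then 2^(M - 2*m) else if (\<forall>t<m-d. U!(d+t) = V!t) then 2^(M - (m+d)) else 0) = (0::nat)"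
      using False ncons by simp
    show ?thesis unfolding e r by simp
  qed
qed



lemma substr_match:
  assumes "length B = M" "1 \<le> k" "k + m - 1 \<le> M" "length T = m"
  shows "(substr B k (k+m-1) = T) \<longleftrightarrow> (\<forall>t<m. B!(k-1+t) = T!t)"
proof -
  have s: "substr B k (k+m-1) = take m (drop (k-1) B)"
    unfolding substr_def using assms by (simp add: algebra_simps)
  have l: "length (take m (drop (k-1) B)) = m" using assms by auto
  show ?thesis unfolding s using assms l
    by (auto simp: list_eq_iff_nth_eq)
qed

lemma ce_neg:
  assumes "0 < d" "d < m" "length T1 = m" "length T2 = m"
  shows "cross_e m T1 T2 (- int d) = (if \<forall>t<m-d. T1!(d+t) = T2!t then 1 else 0)"
proof -
  have a: "substr T1 (1 + d) m = drop d T1" unfolding substr_def using assms by simp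
  have b: "substr T2 1 (m - d) = take (m-d) T2" unfolding substr_def using assms by simp
  have "(drop d T1 = take (m-d) T2) \<longleftrightarrow> (\<forall>t<m-d. T1!(d+t) = T2!t)"
    using assms by (auto simp: list_eq_iff_nth_eq)
  then show ?thesis unfolding cross_e_def using assms a b by auto
qed

lemma ce_pos:
  assumes "0 < d" "d < m" "length T1 = m" "length T2 = m"
  shows "cross_e m T1 T2 (int d) = (if \<forall>t<m-d. T2!(d+t) = T1!t then 1 else 0)"
proof -
  have a: "substr T2 (1 + d) m = drop d T2" unfolding substr_def using assms by simp
  have b: "substr T1 1 (m - d) = take (m-d) T1" unfolding substr_def using assms by simp
  have "(take (m-d) T1 = drop d T2) \<longleftrightarrow> (\<forall>t<m-d. T2!(d+t) = T1!t)"
    using assms by (auto simp: list_eq_iff_nth_eq)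
  then show ?thesis unfolding cross_e_def using assms a b by auto
qed

lemma ce_zero: "cross_e m T1 T2 0 = 0"
  unfolding cross_e_def by simp



definition hh :: "nat \<Rightarrow> bool list \<Rightarrow> bool list \<Rightarrow> int \<Rightarrow> real" where
  "hh m T1 T2 d = (if \<bar>d\<bar> < int m then - 1 / 2^(2*m) + cross_e m T1 T2 (-d) / 2^(m + nat \<bar>d\<bar>) else 0)"

lemma pow2_diff': "n \<le> M \<Longrightarrow> (2::real)^(M-n) = 2^M / 2^n"
  by (simp add: power_diff)

lemma pow2_diff: "n \<le> M \<Longrightarrow> real (2^(M-n)) = 2^M / 2^n"
proof -
  assume "n \<le> M"
  then have "(2::real)^(M-n) = 2^M/2^n" by (rule power_diff[rotated]) simp
  then show ?thesis by simp
qed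

lemma pair_count:
  assumes "m \<ge> 1" "length T1 = m" "length T2 = m" "T1 \<noteq> T2"
    and "1 \<le> k" "k + m - 1 \<le> M" "1 \<le> j" "j + m - 1 \<le> M"
  shows "real (card {B::bool list. length B = M \<and> substr B k (k+m-1) = T1 \<and> substr B j (j+m-1) = T2})
       = 2^M * (1 / 2^(2*m) + hh m T1 T2 (int j - int k))"
proof (cases "k \<le> j")
  case True
  define d where "d = j - k"
  define a where "a = k - 1"
  have jd: "j - 1 = a + d" using True assms unfolding a_def d_def by simp
  have set: "{B::bool list. length B = M \<and> substr B k (k+m-1) = T1 \<and> substr B j (j+m-1) = T2}
     = {B::bool list. length B = M \<and> (\<forall>t<m. B!(a+t) = T1!t) \<and> (\<forall>t<m. B!(a+d+t) = T2!t)}"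
  proof -
    have "\<And>B. length B = M \<Longrightarrow> (substr B k (k+m-1) = T1) \<longleftrightarrow> (\<forall>t<m. B!(a+t) = T1!t)"
      using substr_match[of _ M k m] substr_match[of _ M j m] assms jd unfolding a_def by (simp add: Suc_diff_le)
    moreover have "\<And>B. length B = M \<Longrightarrow> (substr B j (j+m-1) = T2) \<longleftrightarrow> (\<forall>t<m. B!(a+d+t) = T2!t)"
    proof -
      fix B :: "bool list" assume "length B = M"
      moreover have "j - 1 + t = a + d + t" for t using jd by simp
      ultimately show "(substr B j (j+m-1) = T2) \<longleftrightarrow> (\<forall>t<m. B!(a+d+t) = T2!t)"
        using substr_match[of B M j m] assms by simp
    qed
    ultimately show ?thesis by blast
  qed
  have am: "a + d + m \<le> M" using assms jd by simp
  have c: "card {B::bool list. length B = M \<and> substr B k (k+m-1) = T1 \<and> substr B j (j+m-1) = T2}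
    = (if m \<le> d then 2^(M - 2*m) else if (\<forall>t<m-d. T1!(d+t) = T2!t) then 2^(M - (m+d)) else 0)"
    unfolding set by (rule joint[OF am])
  have dd: "int j - int k = int d" using True unfolding d_def by simp
  show ?thesis
  proof (cases "m \<le> d")
    case True
    then have "hh m T1 T2 (int j - int k) = 0" unfolding hh_def dd by simp
    moreover have "2*m \<le> M" using True am by simp
    ultimately show ?thesis unfolding c using True by (simp add: pow2_diff pow2_diff')
  next
    case False
    have md: "m + d \<le> M" using am by simp
    show ?thesis
    proof (cases "d = 0")
      case True
      have "\<not> (\<forall>t<m-d. T1!(d+t) = T2!t)" using True assms by (auto simp: list_eq_iff_nth_eq)
      then show ?thesis unfolding c hh_def dd using True False assms by (simp add: ce_zero)
    next
      case d0: False
      have e: "cross_e m T1 T2 (- int d) = (if \<forall>t<m-d. T1!(d+t) = T2!t then 1 else 0)"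
        using ce_neg[of d m T1 T2] d0 False assms by simp
      have "hh m T1 T2 (int j - int k) = - 1 / 2^(2*m) + cross_e m T1 T2 (- int d) / 2^(m + d)"
        unfolding hh_def dd using False by simp
      then show ?thesis unfolding c e using False md
        by (cases "\<forall>t<m-d. T1!(d+t) = T2!t") (simp_all add: pow2_diff pow2_diff')
    qed
  qed
next
  case False
  define d where "d = k - j"
  define a where "a = j - 1"
  have jd: "k - 1 = a + d" using False assms unfolding a_def d_def by simp
  have set: "{B::bool list. length B = M \<and> substr B k (k+m-1) = T1 \<and> substr B j (j+m-1) = T2}
     = {B::bool list. length B = M \<and> (\<forall>t<m. B!(a+t) = T2!t) \<and> (\<forall>t<m. B!(a+d+t) = T1!t)}"
  proof -
    have "\<And>B. length B = M \<Longrightarrow> (substr B j (j+m-1) = T2) \<longleftrightarrow> (\<forall>t<m. B!(a+t) = T2!t)"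
      using substr_match[of _ M k m] substr_match[of _ M j m] assms jd unfolding a_def by (simp add: Suc_diff_le)
    moreover have "\<And>B. length B = M \<Longrightarrow> (substr B k (k+m-1) = T1) \<longleftrightarrow> (\<forall>t<m. B!(a+d+t) = T1!t)"
    proof -
      fix B :: "bool list" assume "length B = M"
      moreover have "k - 1 + t = a + d + t" for t using jd by simp
      ultimately show "(substr B k (k+m-1) = T1) \<longleftrightarrow> (\<forall>t<m. B!(a+d+t) = T1!t)"
        using substr_match[of B M k m] assms by simp
    qed
    ultimately show ?thesis by blast
  qed
  have am: "a + d + m \<le> M" using assms jd by simp
  have c: "card {B::bool list. length B = M \<and> substr B k (k+m-1) = T1 \<and> substr B j (j+m-1) = T2}
    = (if m \<le> d then 2^(M - 2*m) else if (\<forall>t<m-d. T2!(d+t) = T1!t) then 2^(M - (m+d)) else 0)"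
    unfolding set by (rule joint[OF am])
  have dd: "int j - int k = - int d" using False unfolding d_def by simp
  have d0: "d > 0" using False unfolding d_def by simp
  show ?thesis
  proof (cases "m \<le> d")
    case True
    then have "hh m T1 T2 (int j - int k) = 0" unfolding hh_def dd by simp
    moreover have "2*m \<le> M" using True am by simp
    ultimately show ?thesis unfolding c using True by (simp add: pow2_diff pow2_diff')
  next
    case False
    have md: "m + d \<le> M" using am by simp
    have e: "cross_e m T1 T2 (int d) = (if \<forall>t<m-d. T2!(d+t) = T1!t then 1 else 0)"
      using ce_pos[of d m T1 T2] d0 False assms by simp
    have "hh m T1 T2 (int j - int k) = - 1 / 2^(2*m) + cross_e m T1 T2 (int d) / 2^(m + d)"
      unfolding hh_def dd using False by simp
    then show ?thesis unfolding c e using False md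
      by (cases "\<forall>t<m-d. T2!(d+t) = T1!t") (simp_all add: pow2_diff pow2_diff')
  qed
qed



lemma sum_nat_int: "(\<Sum>k\<in>{1..N::nat}. g (int k)) = (\<Sum>k\<in>{1..int N}. g k)"
proof -
  have "(\<Sum>k\<in>{1..int N}. g k) = (\<Sum>k\<in>int ` {1..N}. g k)" by (simp add: image_int_atLeastAtMost)
  also have "\<dots> = (\<Sum>k\<in>{1..N}. g (int k))" by (rule sum.reindex_cong[where l=int]) auto
  finally show ?thesis by simp
qed

lemma card_shift:
  fixes N d :: int
  assumes "\<bar>d\<bar> \<le> N"
  shows "card {k\<in>{1..N}. k + d \<in> {1..N}} = nat (N - \<bar>d\<bar>)"
proof -
  have "{k\<in>{1..N}. k + d \<in> {1..N}} = {max 1 (1-d)..min N (N-d)}" by auto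
  then show ?thesis using assms by (simp add: max_def min_def abs_if)
qed

lemma double_sum:
  fixes h :: "int \<Rightarrow> real" and r :: int
  assumes van: "\<And>d. \<bar>d\<bar> > r \<Longrightarrow> h d = 0" and rN: "r \<le> int N"
  shows "(\<Sum>k\<in>{1..N}. \<Sum>j\<in>{1..N}. h (int j - int k)) = (\<Sum>d\<in>{-r..r}. h d * (real N - \<bar>d\<bar>))"
proof -
  let ?I = "{1..int N}" and ?D = "{-r..r}"
  have "(\<Sum>k\<in>{1..N}. \<Sum>j\<in>{1..N}. h (int j - int k)) = (\<Sum>k\<in>?I. \<Sum>j\<in>?I. h (j - k))"
  proof -
    have "(\<Sum>k\<in>{1..N}. \<Sum>j\<in>{1..N}. h (int j - int k)) = (\<Sum>k\<in>{1..N}. \<Sum>j\<in>?I. h (j - int k))"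
      by (rule sum.cong[OF refl], rule sum_nat_int)
    also have "\<dots> = (\<Sum>k\<in>?I. \<Sum>j\<in>?I. h (j - k))"
      by (rule sum_nat_int)
    finally show ?thesis .
  qed
  also have "\<dots> = (\<Sum>k\<in>?I. \<Sum>d\<in>?D. h d * (if k + d \<in> ?I then 1 else 0))"
  proof (rule sum.cong[OF refl])
    fix k
    have "(\<Sum>j\<in>?I. h (j - k)) = (\<Sum>j\<in>?I. \<Sum>d\<in>?D. if d = j - k then h d else 0)"
    proof (rule sum.cong[OF refl])
      fix j
      show "h (j - k) = (\<Sum>d\<in>?D. if d = j - k then h d else 0)"
        using van[of "j-k"] by (cases "j - k \<in> ?D") (auto simp: sum.delta' abs_le_iff)
    qed
    also have "\<dots> = (\<Sum>d\<in>?D. \<Sum>j\<in>?I. if j = k + d then h d else 0)"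
      by (subst sum.swap) (rule sum.cong[OF refl], rule sum.cong[OF refl], auto)
    also have "\<dots> = (\<Sum>d\<in>?D. h d * (if k + d \<in> ?I then 1 else 0))"
      by (rule sum.cong[OF refl]) (simp add: sum.delta')
    finally show "(\<Sum>j\<in>?I. h (j - k)) = (\<Sum>d\<in>?D. h d * (if k + d \<in> ?I then 1 else 0))" .
  qed
  also have "\<dots> = (\<Sum>d\<in>?D. h d * (\<Sum>k\<in>?I. if k + d \<in> ?I then 1 else 0))"
    by (subst sum.swap) (simp add: sum_distrib_left)
  also have "\<dots> = (\<Sum>d\<in>?D. h d * (real N - \<bar>d\<bar>))"
  proof (rule sum.cong[OF refl])
    fix d assume "d \<in> ?D"
    then have dN: "\<bar>d\<bar> \<le> int N" using rN by auto
    have "(\<Sum>k\<in>?I. if k + d \<in> ?I then 1 else 0) = real (card {k\<in>?I. k + d \<in> ?I})"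
      by (simp add: sum.If_cases Int_def conj_commute)
    also have "\<dots> = real N - \<bar>d\<bar>" using card_shift[OF dN] dN by simp
    finally show "h d * (\<Sum>k\<in>?I. if k + d \<in> ?I then 1 else 0) = h d * (real N - \<bar>d\<bar>)" by simp
  qed
  finally show ?thesis .
qed



lemma single_count:
  assumes "m \<ge> 1" "length T = m" "1 \<le> k" "k + m - 1 \<le> M"
  shows "real (card {B::bool list. length B = M \<and> substr B k (k+m-1) = T}) = 2^M / 2^m"
proof -
  define a where "a = k - 1"
  have set: "{B::bool list. length B = M \<and> substr B k (k+m-1) = T}
     = {B::bool list. length B = M \<and> (\<forall>t<m. B!(a+t) = T!t) \<and> (\<forall>t<m. B!(a+0+t) = T!t)}"
  proof -
    have "\<And>B. length B = M \<Longrightarrow> (substr B k (k+m-1) = T) \<longleftrightarrow> (\<forall>t<m. B!(a+t) = T!t)"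
      using substr_match[of _ M k m] assms unfolding a_def by (simp add: Suc_diff_le)
    then show ?thesis by auto
  qed
  have am: "a + 0 + m \<le> M" using assms unfolding a_def by simp
  have "card {B::bool list. length B = M \<and> substr B k (k+m-1) = T} = 2^(M-m)"
    unfolding set using joint[OF am, of T T] assms by simp
  then show ?thesis using am by (simp add: pow2_diff')
qed

lemma sym_sum:
  fixes h :: "int \<Rightarrow> real"
  shows "(\<Sum>d\<in>{-int n..int n}. h d) = h 0 + (\<Sum>k=1..n. h (int k) + h (- int k))"
proof (induction n)
  case 0 then show ?case by simp
next
  case (Suc n)
  have e: "{-int (Suc n)..int (Suc n)} = insert (int (Suc n)) (insert (- int (Suc n)) {-int n..int n})"
    by auto
  show ?case unfolding e using Suc by (simp add: add_ac)
qed

lemma H_eq: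
  assumes "m \<ge> 1"
  shows "(\<Sum>d\<in>{-(int m - 1)..int m - 1}. hh m T1 T2 d)
    = (- 2 * real m + 1 + (\<Sum>k=1..m-1. 2 ^ (m - k) * (cross_e m T1 T2 (int k) + cross_e m T1 T2 (- int k)))) / 2^(2*m)"
proof -
  have r: "int m - 1 = int (m - 1)" using assms by simp
  have "(\<Sum>d\<in>{-(int m - 1)..int m - 1}. hh m T1 T2 d)
      = hh m T1 T2 0 + (\<Sum>k=1..m-1. hh m T1 T2 (int k) + hh m T1 T2 (- int k))"
    unfolding r by (rule sym_sum)
  also have "\<dots> = - 1 / 2^(2*m) + (\<Sum>k=1..m-1. - 2 / 2^(2*m)
        + 2 ^ (m - k) * (cross_e m T1 T2 (int k) + cross_e m T1 T2 (- int k)) / 2^(2*m))"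
  proof -
    have "hh m T1 T2 0 = - 1 / 2^(2*m)" unfolding hh_def using assms by (simp add: ce_zero)
    moreover have "hh m T1 T2 (int k) + hh m T1 T2 (- int k) = - 2 / 2^(2*m)
        + 2 ^ (m - k) * (cross_e m T1 T2 (int k) + cross_e m T1 T2 (- int k)) / 2^(2*m)"
      if "k \<in> {1..m-1}" for k
    proof -
      have km: "k < m" using that assms by auto
      have p: "(2::real) ^ (m - k) / 2^(2*m) = 1 / 2^(m+k)"
        using km by (simp add: pow2_diff' power_add mult_2)
      have "hh m T1 T2 (int k) + hh m T1 T2 (- int k) = - 2 / 2^(2*m)
        + (cross_e m T1 T2 (int k) + cross_e m T1 T2 (- int k)) / 2^(m+k)"
        unfolding hh_def using km by (simp add: add_divide_distrib)
      also have "\<dots> = - 2 / 2^(2*m)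
        + 2 ^ (m - k) * (cross_e m T1 T2 (int k) + cross_e m T1 T2 (- int k)) / 2^(2*m)"
      proof -
        have "\<And>x::real. 2 ^ (m - k) * x / 2^(2*m) = x * (2 ^ (m - k) / 2^(2*m))" by simp
        then show ?thesis using p by simp
      qed
      finally show ?thesis .
    qed
    ultimately show ?thesis by (metis (no_types, lifting) sum.cong)
  qed
  also have "\<dots> = (- 2 * real m + 1 + (\<Sum>k=1..m-1. 2 ^ (m - k) * (cross_e m T1 T2 (int k) + cross_e m T1 T2 (- int k)))) / 2^(2*m)"
  proof -
    let ?c = "(2::real)^(2*m)"
    let ?A = "\<lambda>k. 2 ^ (m - k) * (cross_e m T1 T2 (int k) + cross_e m T1 T2 (- int k))"
    have "(\<Sum>k=1..m-1. - 2 / ?c + ?A k / ?c) = real (m-1) * (- 2 / ?c) + (\<Sum>k=1..m-1. ?A k) / ?c"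
      by (simp add: sum.distrib sum_subtractf sum_divide_distrib)
    moreover have "- 1 / ?c + (real (m-1) * (- 2 / ?c) + (\<Sum>k=1..m-1. ?A k) / ?c)
        = (- 2 * real m + 1 + (\<Sum>k=1..m-1. ?A k)) / ?c"
      using assms by (simp add: of_nat_diff field_simps)
    ultimately show ?thesis by simp
  qed
  finally show ?thesis .
qed



lemma card_if_sum: "finite A \<Longrightarrow> real (card {k\<in>A. P k}) = (\<Sum>k\<in>A. if P k then 1 else 0)"
  by (simp add: sum.If_cases Int_def conj_commute)

lemma two_m_le: "1 \<le> m \<Longrightarrow> 2 * m \<le> (2::nat) ^ m"
proof (induction m)
  case 0 then show ?case by simp
next
  case (Suc n)
  show ?case
  proof (cases "n = 0")
    case True then show ?thesis by simp
  next
    case False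
    then have "2 * n \<le> 2 ^ n" using Suc by simp
    moreover have "2 \<le> (2::nat) ^ n" using False by (cases n) auto
    ultimately show ?thesis by simp
  qed
qed

lemma occ_sum:
  assumes "m \<le> M"
  shows "real (occ_count M m T B) = (\<Sum>k\<in>{1..M-m+1}. if substr B k (k+m-1) = T then 1 else 0)"
  unfolding occ_count_def by (rule card_if_sum) simp

lemma sum_single:
  assumes "1 \<le> m" "m \<le> M" "length T = m"
  shows "(\<Sum>B\<in>{B::bool list. length B = M}. real (occ_count M m T B)) = real (M-m+1) * 2^M / 2^m"
proof -
  have "(\<Sum>B\<in>{B::bool list. length B = M}. real (occ_count M m T B))
      = (\<Sum>B\<in>{B::bool list. length B = M}. \<Sum>k\<in>{1..M-m+1}. if substr B k (k+m-1) = T then 1 else 0)"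
    using assms by (simp add: occ_sum)
  also have "\<dots> = (\<Sum>k\<in>{1..M-m+1}. \<Sum>B\<in>{B::bool list. length B = M}. if substr B k (k+m-1) = T then 1 else 0)"
    by (rule sum.swap)
  also have "\<dots> = (\<Sum>k\<in>{1..M-m+1}. (2::real)^M / 2^m)"
  proof (rule sum.cong[OF refl])
    fix k assume k: "k \<in> {1..M-m+1}"
    have "(\<Sum>B\<in>{B::bool list. length B = M}. if substr B k (k+m-1) = T then 1 else (0::real))
        = real (card {B\<in>{B::bool list. length B = M}. substr B k (k+m-1) = T})"
      by (rule card_if_sum[symmetric]) (rule finite_bool_lists)
    also have "\<dots> = 2^M / 2^m"
    proof -
      have "1 \<le> k" "k + m - 1 \<le> M" using k assms by auto
      then show ?thesis using single_count[of m T k M] assms by simp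
    qed
    finally show "(\<Sum>B\<in>{B::bool list. length B = M}. if substr B k (k+m-1) = T then 1 else 0) = (2::real)^M / 2^m" .
  qed
  finally show ?thesis by simp
qed

lemma sum_pair:
  assumes "1 \<le> m" "m \<le> M" "length T1 = m" "length T2 = m" "T1 \<noteq> T2"
  shows "(\<Sum>B\<in>{B::bool list. length B = M}. real (occ_count M m T1 B) * real (occ_count M m T2 B))
     = 2^M * (real (M-m+1) ^ 2 / 2^(2*m) + (\<Sum>k\<in>{1..M-m+1}. \<Sum>j\<in>{1..M-m+1}. hh m T1 T2 (int j - int k)))"
proof -
  let ?N = "M-m+1" and ?O = "{B::bool list. length B = M}"
  let ?a = "\<lambda>k B. if substr B k (k+m-1) = T1 then 1 else (0::real)"
  let ?b = "\<lambda>j B. if substr B j (j+m-1) = T2 then 1 else (0::real)"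
  have "(\<Sum>B\<in>?O. real (occ_count M m T1 B) * real (occ_count M m T2 B))
      = (\<Sum>B\<in>?O. (\<Sum>k\<in>{1..?N}. ?a k B) * (\<Sum>j\<in>{1..?N}. ?b j B))"
    using assms by (simp add: occ_sum)
  also have "\<dots> = (\<Sum>B\<in>?O. \<Sum>k\<in>{1..?N}. \<Sum>j\<in>{1..?N}. ?a k B * ?b j B)"
    by (rule sum.cong[OF refl]) (rule sum_product)
  also have "\<dots> = (\<Sum>k\<in>{1..?N}. \<Sum>j\<in>{1..?N}. \<Sum>B\<in>?O. ?a k B * ?b j B)"
    by (subst sum.swap) (rule sum.cong[OF refl], rule sum.swap)
  also have "\<dots> = (\<Sum>k\<in>{1..?N}. \<Sum>j\<in>{1..?N}. 2^M * (1 / 2^(2*m) + hh m T1 T2 (int j - int k)))"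
  proof (intro sum.cong[OF refl])
    fix k j assume k: "k \<in> {1..?N}" and j: "j \<in> {1..?N}"
    have "(\<Sum>B\<in>?O. ?a k B * ?b j B) = (\<Sum>B\<in>?O. if substr B k (k+m-1) = T1 \<and> substr B j (j+m-1) = T2 then 1 else 0)"
      by (rule sum.cong) auto
    also have "\<dots> = real (card {B\<in>?O. substr B k (k+m-1) = T1 \<and> substr B j (j+m-1) = T2})"
      by (rule card_if_sum[symmetric]) (rule finite_bool_lists)
    also have "\<dots> = 2^M * (1 / 2^(2*m) + hh m T1 T2 (int j - int k))"
    proof -
      have "1 \<le> k" "k + m - 1 \<le> M" "1 \<le> j" "j + m - 1 \<le> M" using k j assms by auto
      then show ?thesis using pair_count[of m T1 T2 k M j] assms by simp
    qed
    finally show "(\<Sum>B\<in>?O. ?a k B * ?b j B) = 2^M * (1 / 2^(2*m) + hh m T1 T2 (int j - int k))" .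
  qed
  also have "\<dots> = 2^M * (real ?N ^ 2 / 2^(2*m) + (\<Sum>k\<in>{1..?N}. \<Sum>j\<in>{1..?N}. hh m T1 T2 (int j - int k)))"
    by (simp add: sum_distrib_left[symmetric] sum.distrib power2_eq_square algebra_simps)
  finally show ?thesis .
qed



lemma alg1: fixes X c N Y :: real assumes "c \<noteq> 0"
  shows "X * (N^2 / (c*c) + Y) - (N/c) * (N * X / c) - (N/c) * (N * X / c) + X * (N/c)^2 = X * Y"
  using assms by (simp add: field_simps power2_eq_square)

lemma alg2: fixes K M m L R :: real assumes "K \<noteq> 0" "M \<noteq> 0"
  shows "((M - m + 1) * (K * L) - R) / (M * K) - L = ((- (m - 1) * (K * L) - R) / K) * (1 / M)"
  using assms by (simp add: field_simps)

theorem mainTheorem1: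
  fixes m :: nat and T1 T2 :: "bool list"
  assumes "m \<ge> 2"
    and "length T1 = m" and "length T2 = m" and "T1 \<noteq> T2"
    and "non_overlapping m T1" and "non_overlapping m T2"
  shows "(\<lambda>M::nat.
            measure_pmf.expectation (pmf_of_set {B. length B = M})
              (\<lambda>B. ((real (occ_count M m T1 B) - (real M - real m + 1) / 2 ^ m)
                     / sqrt (real M * (1 / 2 ^ m - (2 * real m - 1) / 2 ^ (2 * m))))
                  * ((real (occ_count M m T2 B) - (real M - real m + 1) / 2 ^ m)
                     / sqrt (real M * (1 / 2 ^ m - (2 * real m - 1) / 2 ^ (2 * m)))))
          - (- 2 * real m + 1
             + (\<Sum>k=1..m-1. 2 ^ (m - k) * (cross_e m T1 T2 (int k) + cross_e m T1 T2 (- int k))))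
            / (2 ^ m - 2 * real m + 1))
         \<in> O(\<lambda>M. 1 / real M)"
proof -
  have m1: "1 \<le> m" using assms by simp
  define K where "K = 1 / 2 ^ m - (2 * real m - 1) / (2::real) ^ (2 * m)"
  define Num where "Num = - 2 * real m + 1
             + (\<Sum>k=1..m-1. 2 ^ (m - k) * (cross_e m T1 T2 (int k) + cross_e m T1 T2 (- int k)))"
  define L where "L = Num / (2 ^ m - 2 * real m + 1)"
  define D where "D = {-(int m - 1)..int m - 1}"
  define H where "H = (\<Sum>d\<in>D. hh m T1 T2 d)"
  define R where "R = (\<Sum>d\<in>D. hh m T1 T2 d * real_of_int \<bar>d\<bar>)"
  have pos: "2 ^ m - 2 * real m + 1 > 0"
  proof -
    have "real (2 * m) \<le> real ((2::nat) ^ m)" using two_m_le[OF m1] by linarith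
    then show ?thesis by simp
  qed
  have Kdef2: "K = (2 ^ m - 2 * real m + 1) / 2 ^ (2*m)"
  proof -
    have "(2::real) ^ (2*m) = 2^m * 2^m" by (simp add: power_add mult_2)
    then show ?thesis unfolding K_def by (simp add: diff_divide_distrib add_divide_distrib)
  qed
  have Kpos: "K > 0" unfolding Kdef2 using pos by simp
  have HKL: "H = K * L"
    unfolding H_def D_def H_eq[OF m1] Kdef2 L_def Num_def using pos by simp
  define C0 where "C0 = (- (real m - 1) * H - R) / K"
  have key: "measure_pmf.expectation (pmf_of_set {B. length B = M})
              (\<lambda>B. ((real (occ_count M m T1 B) - (real M - real m + 1) / 2 ^ m)
                     / sqrt (real M * (1 / 2 ^ m - (2 * real m - 1) / 2 ^ (2 * m))))
                  * ((real (occ_count M m T2 B) - (real M - real m + 1) / 2 ^ m)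
                     / sqrt (real M * (1 / 2 ^ m - (2 * real m - 1) / 2 ^ (2 * m)))))
          - L = C0 * (1 / real M)" if M: "2 * m \<le> M" for M
  proof -
    let ?O = "{B::bool list. length B = M}"
    let ?N = "M - m + 1"
    have Mm: "m \<le> M" using M by simp
    have RN: "real ?N = real M - real m + 1" using Mm by simp
    have Mpos: "real M > 0" using M m1 by simp
    define mu where "mu = real ?N / 2^m"
    have mu_eq: "(real M - real m + 1) / 2 ^ m = mu" unfolding mu_def RN ..
    have sig: "sqrt (real M * K) * sqrt (real M * K) = real M * K"
      using Kpos Mpos by simp
    let ?c1 = "\<lambda>B. real (occ_count M m T1 B)" and ?c2 = "\<lambda>B. real (occ_count M m T2 B)"
    have fin: "finite ?O" by (rule finite_bool_lists)
    have ne: "?O \<noteq> {}" using length_replicate[of M False] by blast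
    have cardO: "real (card ?O) = 2^M" by (simp add: card_bool_lists)
    have E: "measure_pmf.expectation (pmf_of_set ?O)
              (\<lambda>B. ((?c1 B - (real M - real m + 1) / 2 ^ m)
                     / sqrt (real M * (1 / 2 ^ m - (2 * real m - 1) / 2 ^ (2 * m))))
                  * ((?c2 B - (real M - real m + 1) / 2 ^ m)
                     / sqrt (real M * (1 / 2 ^ m - (2 * real m - 1) / 2 ^ (2 * m)))))
        = (\<Sum>B\<in>?O. (?c1 B - mu) * (?c2 B - mu)) / (real M * K) / 2^M"
      unfolding integral_pmf_of_set[OF ne fin] mu_eq K_def[symmetric] cardO
      using Kpos Mpos by (simp add: sig sum_divide_distrib)
    have S: "(\<Sum>B\<in>?O. (?c1 B - mu) * (?c2 B - mu))
        = (\<Sum>B\<in>?O. ?c1 B * ?c2 B) - mu * (\<Sum>B\<in>?O. ?c1 B) - mu * (\<Sum>B\<in>?O. ?c2 B) + 2^M * mu^2"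
    proof -
      have "(\<Sum>B\<in>?O. (?c1 B - mu) * (?c2 B - mu)) = (\<Sum>B\<in>?O. ?c1 B * ?c2 B - mu * ?c1 B - mu * ?c2 B + mu^2)"
        by (rule sum.cong) (auto simp: algebra_simps power2_eq_square)
      also have "\<dots> = (\<Sum>B\<in>?O. ?c1 B * ?c2 B) - mu * (\<Sum>B\<in>?O. ?c1 B) - mu * (\<Sum>B\<in>?O. ?c2 B) + real (card ?O) * mu^2"
        by (simp add: sum.distrib sum_subtractf sum_distrib_left)
      finally show ?thesis unfolding cardO .
    qed
    have DS: "(\<Sum>k\<in>{1..?N}. \<Sum>j\<in>{1..?N}. hh m T1 T2 (int j - int k)) = real ?N * H - R"
    proof -
      have "(\<Sum>k\<in>{1..?N}. \<Sum>j\<in>{1..?N}. hh m T1 T2 (int j - int k)) = (\<Sum>d\<in>D. hh m T1 T2 d * (real ?N - \<bar>d\<bar>))"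
        unfolding D_def
      proof (rule double_sum)
        show "\<And>d. int m - 1 < \<bar>d\<bar> \<Longrightarrow> hh m T1 T2 d = 0" unfolding hh_def by simp
        show "int m - 1 \<le> int ?N" using M by simp
      qed
      also have "\<dots> = real ?N * H - R" unfolding H_def R_def
        by (simp add: algebra_simps sum_subtractf sum_distrib_left)
      finally show ?thesis .
    qed
    have "(\<Sum>B\<in>?O. (?c1 B - mu) * (?c2 B - mu)) = 2^M * (real ?N * H - R)"
    proof -
      have p: "(2::real)^(2*m) = 2^m * 2^m" by (simp add: power_add mult_2)
      show ?thesis
        unfolding S sum_pair[OF m1 Mm assms(2,3,4)] sum_single[OF m1 Mm assms(2)] sum_single[OF m1 Mm assms(3)] DS
        unfolding mu_def p by (rule alg1) simp
    qed
    then have "measure_pmf.expectation (pmf_of_set ?O)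
              (\<lambda>B. ((?c1 B - (real M - real m + 1) / 2 ^ m)
                     / sqrt (real M * (1 / 2 ^ m - (2 * real m - 1) / 2 ^ (2 * m))))
                  * ((?c2 B - (real M - real m + 1) / 2 ^ m)
                     / sqrt (real M * (1 / 2 ^ m - (2 * real m - 1) / 2 ^ (2 * m)))))
        = (real ?N * H - R) / (real M * K)" (is "_ = ?rhs")
      unfolding E by simp
    then have exE: "measure_pmf.expectation (pmf_of_set {B. length B = M})
              (\<lambda>B. ((real (occ_count M m T1 B) - (real M - real m + 1) / 2 ^ m)
                     / sqrt (real M * (1 / 2 ^ m - (2 * real m - 1) / 2 ^ (2 * m))))
                  * ((real (occ_count M m T2 B) - (real M - real m + 1) / 2 ^ m)
                     / sqrt (real M * (1 / 2 ^ m - (2 * real m - 1) / 2 ^ (2 * m))))) = ?rhs" .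
    show ?thesis unfolding exE RN HKL C0_def
      by (rule alg2) (use Kpos Mpos in auto)
  qed
  show ?thesis
  proof (rule bigoI[where c = "\<bar>C0\<bar>"])
    show "eventually (\<lambda>M. norm (measure_pmf.expectation (pmf_of_set {B. length B = M})
              (\<lambda>B. ((real (occ_count M m T1 B) - (real M - real m + 1) / 2 ^ m)
                     / sqrt (real M * (1 / 2 ^ m - (2 * real m - 1) / 2 ^ (2 * m))))
                  * ((real (occ_count M m T2 B) - (real M - real m + 1) / 2 ^ m)
                     / sqrt (real M * (1 / 2 ^ m - (2 * real m - 1) / 2 ^ (2 * m)))))
          - (- 2 * real m + 1
             + (\<Sum>k=1..m-1. 2 ^ (m - k) * (cross_e m T1 T2 (int k) + cross_e m T1 T2 (- int k))))
            / (2 ^ m - 2 * real m + 1)) \<le> \<bar>C0\<bar> * norm (1 / real M)) at_top"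
      using eventually_ge_at_top[of "2*m"]
    proof eventually_elim
      case (elim M)
      show ?case using key[OF elim] unfolding L_def Num_def by (simp add: abs_mult)
    qed
  qed
qed

end
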